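(* Let $K$ be a field, $V$ a vector space over $K$, and $f_L,f_R,g_L,g_R:V\to V$ linear maps. The algebra $A(f_L,f_R,g_L,g_R)$ is associative if and only if $$f_L\circ g_L=g_L\circ f_L=0,\quad f_R\circ g_R=g_R\circ f_R=0,\quad g_R\circ f_L=g_L\circ f_R,\quad f_R\circ g_L=f_L\circ g_R.$$
   Context: Let $V'$ be a second copy of $V$, identified with $V$ via a linear bijection $v\mapsto v'$. The algebra $A(f_L,f_R,g_L,g_R)$ is the vector space $Ke\oplus Ka\oplus V\oplus V'$ (with $e,a$ two new basis elements) with bilinear multiplication determined by $e^2=e$, $a^2=0$, $av=f_L(v)'$, $va=f_R(v)'$, $av'=g_L(v)$, $v'a=g_R(v)$ for $v\in V$, and all other products among $e$, $a$, elements of $V$ and elements of $V'$ equal to zero (in particular $ea=ae=0$, $ev=ve=ev'=v'e=0$, and $VV=VV'=V'V=V'V'=0$). *)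

theory Defs
  imports Complex_Main
begin

text \<open>Elements of A(fL,fR,gL,gR) = K e + K a + V + V' are represented as
  tuples (alpha, beta, v, w) standing for alpha e + beta a + v + w'.
  The multiplication is the bilinear extension of the defining rules:
  e e = e, a a = 0, a v = fL(v)', v a = fR(v)', a v' = gL(v), v' a = gR(v),
  all other products of basis pieces zero.\<close>

type_synonym ('k, 'v) Aelem = "'k \<times> 'k \<times> 'v \<times> 'v"

definition A_mult ::
  "('k::field \<Rightarrow> 'v::ab_group_add \<Rightarrow> 'v) \<Rightarrow> ('v \<Rightarrow> 'v) \<Rightarrow> ('v \<Rightarrow> 'v) \<Rightarrow> ('v \<Rightarrow> 'v) \<Rightarrow> ('v \<Rightarrow> 'v)
   \<Rightarrow> ('k, 'v) Aelem \<Rightarrow> ('k, 'v) Aelem \<Rightarrow> ('k, 'v) Aelem" where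
  "A_mult scale fL fR gL gR x y =
     (case x of (\<alpha>, \<beta>, v, w) \<Rightarrow> case y of (\<gamma>, \<delta>, v2, w2) \<Rightarrow>
        (\<alpha> * \<gamma>,
         0,
         scale \<beta> (gL w2) + scale \<delta> (gR w),
         scale \<beta> (fL v2) + scale \<delta> (fR v)))"

definition A_associative ::
  "('k::field \<Rightarrow> 'v::ab_group_add \<Rightarrow> 'v) \<Rightarrow> ('v \<Rightarrow> 'v) \<Rightarrow> ('v \<Rightarrow> 'v) \<Rightarrow> ('v \<Rightarrow> 'v) \<Rightarrow> ('v \<Rightarrow> 'v) \<Rightarrow> bool" where
  "A_associative scale fL fR gL gR \<longleftrightarrow>
     (\<forall>x y z. A_mult scale fL fR gL gR (A_mult scale fL fR gL gR x y) z
            = A_mult scale fL fR gL gR x (A_mult scale fL fR gL gR y z))"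

end

theory Submission
  imports Defs
begin

theorem mainTheorem3:
  fixes scale :: "'k::field \<Rightarrow> 'v::ab_group_add \<Rightarrow> 'v"
    and fL fR gL gR :: "'v \<Rightarrow> 'v"
  assumes "Vector_Spaces.vector_space scale"
    and "Vector_Spaces.linear scale scale fL" and "Vector_Spaces.linear scale scale fR"
    and "Vector_Spaces.linear scale scale gL" and "Vector_Spaces.linear scale scale gR"
  shows "A_associative scale fL fR gL gR \<longleftrightarrow>
     (fL \<circ> gL = (\<lambda>_. 0) \<and> gL \<circ> fL = (\<lambda>_. 0) \<and>
      fR \<circ> gR = (\<lambda>_. 0) \<and> gR \<circ> fR = (\<lambda>_. 0) \<and>
      gR \<circ> fL = gL \<circ> fR \<and> fR \<circ> gL = fL \<circ> gR)"
proof -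
  interpret vs: vector_space scale by fact
  have l0: "\<And>f. Vector_Spaces.linear scale scale f \<Longrightarrow> f 0 = 0"
    proof -
    fix f assume "Vector_Spaces.linear scale scale f"
    hence "\<forall>x y. f (x + y) = f x + f y" by (simp add: Vector_Spaces.linear_iff)
    hence "f (0 + 0) = f 0 + f 0" by blast
    thus "f 0 = 0" by simp
  qed
  have la: "\<And>f x y. Vector_Spaces.linear scale scale f \<Longrightarrow> f (x + y) = f x + f y"
    by (simp add: Vector_Spaces.linear_iff)
  have ls: "\<And>f c x. Vector_Spaces.linear scale scale f \<Longrightarrow> f (scale c x) = scale c (f x)"
    by (simp add: Vector_Spaces.linear_iff)
  note Z = l0[OF assms(2)] l0[OF assms(3)] l0[OF assms(4)] l0[OF assms(5)]
  have mult: "\<And>\<alpha> \<beta> v w \<gamma> \<delta> v2 w2. A_mult scale fL fR gL gR (\<alpha>, \<beta>, v, w) (\<gamma>, \<delta>, v2, w2) =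
     (\<alpha> * \<gamma>, 0, scale \<beta> (gL w2) + scale \<delta> (gR w), scale \<beta> (fL v2) + scale \<delta> (fR v))"
    by (simp add: A_mult_def)
  show ?thesis
  proof
    assume A: "A_associative scale fL fR gL gR"
    have E: "\<And>x y z. A_mult scale fL fR gL gR (A_mult scale fL fR gL gR x y) z
            = A_mult scale fL fR gL gR x (A_mult scale fL fR gL gR y z)"
      using A unfolding A_associative_def by blast
    have 1: "gL (fL v) = 0 \<and> fL (gL v) = 0" for v
      using E[of "(0,1,0,0)" "(0,1,0,0)" "(0,0,v,v)"] by (simp add: mult Z)
    have 2: "gR (fR v) = 0 \<and> fR (gR v) = 0" for v
      using E[of "(0,0,v,v)" "(0,1,0,0)" "(0,1,0,0)"] by (simp add: mult Z)
    have 3: "gR (fL v) = gL (fR v) \<and> fR (gL v) = fL (gR v)" for v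
      using E[of "(0,1,0,0)" "(0,0,v,v)" "(0,1,0,0)"] by (simp add: mult Z)
    show "fL \<circ> gL = (\<lambda>_. 0) \<and> gL \<circ> fL = (\<lambda>_. 0) \<and>
      fR \<circ> gR = (\<lambda>_. 0) \<and> gR \<circ> fR = (\<lambda>_. 0) \<and>
      gR \<circ> fL = gL \<circ> fR \<and> fR \<circ> gL = fL \<circ> gR"
      using 1 2 3 by (auto simp: fun_eq_iff)
  next
    assume C: "fL \<circ> gL = (\<lambda>_. 0) \<and> gL \<circ> fL = (\<lambda>_. 0) \<and>
      fR \<circ> gR = (\<lambda>_. 0) \<and> gR \<circ> fR = (\<lambda>_. 0) \<and>
      gR \<circ> fL = gL \<circ> fR \<and> fR \<circ> gL = fL \<circ> gR"
    hence c: "\<And>v. fL (gL v) = 0" "\<And>v. gL (fL v) = 0" "\<And>v. fR (gR v) = 0"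
      "\<And>v. gR (fR v) = 0" "\<And>v. gR (fL v) = gL (fR v)" "\<And>v. fR (gL v) = fL (gR v)"
      by (auto simp: fun_eq_iff dest: fun_cong)
    show "A_associative scale fL fR gL gR"
      unfolding A_associative_def
    proof (intro allI)
      fix x y z :: "('k,'v) Aelem"
      obtain \<alpha> \<beta> v w where x: "x = (\<alpha>, \<beta>, v, w)" by (cases x) auto
      obtain \<gamma> \<delta> v2 w2 where y: "y = (\<gamma>, \<delta>, v2, w2)" by (cases y) auto
      obtain \<epsilon> \<eta> v3 w3 where z: "z = (\<epsilon>, \<eta>, v3, w3)" by (cases z) auto
      show "A_mult scale fL fR gL gR (A_mult scale fL fR gL gR x y) z
            = A_mult scale fL fR gL gR x (A_mult scale fL fR gL gR y z)"
        by (simp add: x y z mult Z c la[OF assms(2)] la[OF assms(3)] la[OF assms(4)] la[OF assms(5)]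
            ls[OF assms(2)] ls[OF assms(3)] ls[OF assms(4)] ls[OF assms(5)]
            vs.scale_scale mult.commute mult.left_commute)
    qed
  qed
qed

end
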